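(* Let $\alpha\colon\mathbb{R}\to\mathbb{R}$ be continuous, $\eta(w)=w+\frac{\alpha(w)}{2}$, and $S_\alpha=\bigcup_{w\in\mathbb{R}}[(-1,-\alpha(w),\eta(w)),(1,\alpha(w),\eta(w))]$. Then $S_\alpha$ is a graphical strip over $K$ if and only if $\frac{\alpha(w_2)-\alpha(w_1)}{w_2-w_1}\ge-2$ for all $w_1<w_2$ and $\eta(\mathbb{R})=\mathbb{R}$.
   Context: $\mathbb{H}$ is $\mathbb{R}^3$ with product $(x,y,z)\cdot(x',y',z')=(x+x',y+y',z+z'+\frac{xy'-yx'}{2})$; $Y^t=(0,t,0)$. A horizontal line is a set $\{p\cdot tv:t\in\mathbb{R}\}$, $v=(a,b,0)\neq0$; a ruled surface is a union of horizontal segments (rulings) with endpoints in its boundary. $V_0=\{(x,0,z)\}$; for $D\subset V_0$ and $f\colon D\to\mathbb{R}$, $\Gamma_f=\{u\cdot Y^{f(u)}:u\in D\}$. A graphical strip over $D$ is an intrinsic graph $\Gamma_f$ of a continuous $f\colon D\to\mathbb{R}$ which is ruled and all of whose rulings intersect the $z$-axis. $K=\{(x,0,z):-1\le x\le1\}$. $[p_1,p_2]$ is the line segment from $p_1$ to $p_2$. *)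

theory Defs
  imports "HOL-Analysis.Analysis"
begin

type_synonym heis = "real \<times> real \<times> real"

fun hmul :: "heis \<Rightarrow> heis \<Rightarrow> heis" where
  "hmul (x, y, z) (x', y', z') = (x + x', y + y', z + z' + (x * y' - y * x') / 2)"

definition Yt :: "real \<Rightarrow> heis" where
  "Yt t = (0, t, 0)"

definition V0 :: "heis set" where
  "V0 = {(x, 0, z) | x z. True}"

definition z_axis :: "heis set" where
  "z_axis = {(0, 0, z) | z. True}"

definition intrinsic_graph :: "heis set \<Rightarrow> (heis \<Rightarrow> real) \<Rightarrow> heis set" where
  "intrinsic_graph D f = {hmul u (Yt (f u)) | u. u \<in> D}"

text \<open>q lies on the horizontal line through p in a horizontal direction v = (a,b,0) \<noteq> 0,
  i.e. q = p \<cdot> v; horizontal lines are Euclidean lines, so the segment is the Euclidean one.\<close>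
definition horizontal_pair :: "heis \<Rightarrow> heis \<Rightarrow> bool" where
  "horizontal_pair p q \<longleftrightarrow> (\<exists>a b. (a, b) \<noteq> (0, 0) \<and> q = hmul p (a, b, 0))"

definition horizontal_segment :: "heis set \<Rightarrow> bool" where
  "horizontal_segment \<sigma> \<longleftrightarrow> (\<exists>p q. horizontal_pair p q \<and> \<sigma> = closed_segment p q)"

definition graph_boundary :: "heis set \<Rightarrow> (heis \<Rightarrow> real) \<Rightarrow> heis set" where
  "graph_boundary D f = intrinsic_graph ((subtopology euclidean V0) frontier_of D) f"

definition graphical_strip :: "heis set \<Rightarrow> heis set \<Rightarrow> bool" where
  "graphical_strip D S \<longleftrightarrow> D \<subseteq> V0 \<and>
     (\<exists>f. continuous_on D f \<and> S = intrinsic_graph D f \<and>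
        (\<exists>R. \<Union>R = S \<and>
           (\<forall>\<sigma>\<in>R. (\<exists>p q. horizontal_pair p q \<and> \<sigma> = closed_segment p q \<and>
                        p \<in> graph_boundary D f \<and> q \<in> graph_boundary D f)
                    \<and> \<sigma> \<inter> z_axis \<noteq> {})))"

definition K :: "heis set" where
  "K = {(x, 0, z) | x z. -1 \<le> x \<and> x \<le> 1}"

definition S_alpha :: "(real \<Rightarrow> real) \<Rightarrow> heis set" where
  "S_alpha \<alpha> = (\<Union>w. closed_segment (-1, - \<alpha> w, w + \<alpha> w / 2) (1, \<alpha> w, w + \<alpha> w / 2))"

end

theory Submission
  imports Defs
begin


lemma seg_mem:
  "P \<in> closed_segment ((-1::real), -a, e) (1, a, e) \<longleftrightarrow> (\<exists>t. -1 \<le> t \<and> t \<le> 1 \<and> P = (t, t*a, (e::real)))"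
proof
  assume "P \<in> closed_segment ((-1::real), -a, e) (1, a, e)"
  then obtain u where u: "0 \<le> u" "u \<le> 1" "P = (1 - u) *\<^sub>R ((-1::real), -a, e) + u *\<^sub>R (1, a, e)"
    unfolding closed_segment_def by auto
  show "\<exists>t. -1 \<le> t \<and> t \<le> 1 \<and> P = (t, t*a, (e::real))"
    by (rule exI[of _ "2*u-1"]) (use u in \<open>auto simp: algebra_simps\<close>)
next
  assume "\<exists>t. -1 \<le> t \<and> t \<le> 1 \<and> P = (t, t*a, (e::real))"
  then obtain t where t: "-1 \<le> t" "t \<le> 1" "P = (t, t*a, e)" by auto
  show "P \<in> closed_segment ((-1::real), -a, e) (1, a, e)"
    unfolding closed_segment_def
    by (rule CollectI, rule exI[of _ "(t+1)/2"]) (use t in \<open>auto simp: field_simps\<close>)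
qed

lemma graph_mem:
  "P \<in> intrinsic_graph K f \<longleftrightarrow> (\<exists>x z. -1\<le>x \<and> x\<le>1 \<and> P = (x, f(x,0,z), z + x * f(x,0,z)/2))"
  by (auto simp: intrinsic_graph_def K_def Yt_def)

lemma Salpha_mem:
  "P \<in> S_alpha \<alpha> \<longleftrightarrow> (\<exists>w t. -1 \<le> t \<and> t \<le> 1 \<and> P = (t, t * \<alpha> w, w + \<alpha> w / 2))"
  unfolding S_alpha_def using seg_mem by blast



lemma forward:
  fixes \<alpha> :: "real \<Rightarrow> real"
  assumes "graphical_strip K (S_alpha \<alpha>)"
  shows "(\<forall>w1 w2. w1 < w2 \<longrightarrow> (\<alpha> w2 - \<alpha> w1) / (w2 - w1) \<ge> -2) \<and> range (\<lambda>w. w + \<alpha> w / 2) = UNIV"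
proof -
  from assms obtain f where fS: "S_alpha \<alpha> = intrinsic_graph K f"
    unfolding graphical_strip_def by blast
  have surj: "range (\<lambda>w. w + \<alpha> w / 2) = UNIV"
  proof -
    have "z \<in> range (\<lambda>w. w + \<alpha> w / 2)" for z
    proof -
      have "(0, f(0,0,z), z) \<in> intrinsic_graph K f"
        unfolding graph_mem by (rule exI[of _ 0], rule exI[of _ z]) simp
      then obtain w t where "(0::real, f(0,0,z), z) = (t, t * \<alpha> w, w + \<alpha> w / 2)"
        unfolding fS[symmetric] Salpha_mem by blast
      then show ?thesis by auto
    qed
    then show ?thesis by auto
  qed
  have slope: "(\<alpha> w2 - \<alpha> w1) / (w2 - w1) \<ge> -2" if w: "w1 < w2" for w1 w2
  proof (rule ccontr)
    assume "\<not> ?thesis"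
    then have lt: "\<alpha> w2 - \<alpha> w1 < -2 * (w2 - w1)"
      using w by (simp add: not_le pos_divide_less_eq)
    define sv where "sv = (w2 - w1) / (\<alpha> w1 - \<alpha> w2)"
    have s0: "0 < sv" using lt w by (simp add: sv_def)
    have s1: "sv < 1/2" using lt w by (simp add: sv_def divide_less_eq)
    define t where "t = sqrt (1 - 2* sv)"
    have t0: "0 < t" "t \<le> 1" using s0 s1 by (auto simp: t_def)
    have tt: "t^2 = 1 - 2* sv" using s1 by (simp add: t_def)
    have key: "w1 + sv * \<alpha> w1 = w2 + sv * \<alpha> w2"
      using lt w by (simp add: sv_def field_simps)
    have mem: "(t, t * \<alpha> w, w + \<alpha> w / 2) \<in> intrinsic_graph K f" for w
      unfolding fS[symmetric] Salpha_mem using t0 by auto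
    have ex: "f (t, 0, w + sv * \<alpha> w) = t * \<alpha> w" for w
    proof -
      from mem[of w] obtain x z where xz: "(t, t * \<alpha> w, w + \<alpha> w / 2) = (x, f(x,0,z), z + x * f(x,0,z)/2)"
        unfolding graph_mem by blast
      then have "x = t" "f(t,0,z) = t * \<alpha> w" by auto
      moreover have "z = w + \<alpha> w / 2 - t^2 * \<alpha> w / 2"
        using xz \<open>x = t\<close> \<open>f(t,0,z) = t * \<alpha> w\<close> by (auto simp: field_simps power2_eq_square)
      then have "z = w + sv * \<alpha> w" unfolding tt by (simp add: field_simps)
      ultimately show ?thesis by simp
    qed
    have "t * \<alpha> w1 = t * \<alpha> w2" using ex[of w1] ex[of w2] key by metis
    then have "\<alpha> w1 = \<alpha> w2" using t0 by simp
    then show False using lt w by simp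
  qed
  show ?thesis using slope surj by blast
qed



definition gg :: "(real \<Rightarrow> real) \<Rightarrow> real \<Rightarrow> real \<Rightarrow> real" where
  "gg \<alpha> x w = w + (1 - x^2) / 2 * \<alpha> w"

definition WW :: "(real \<Rightarrow> real) \<Rightarrow> real \<Rightarrow> real \<Rightarrow> real" where
  "WW \<alpha> x z = (SOME w. gg \<alpha> x w = z)"

lemma sq_le1: "-1 \<le> (x::real) \<Longrightarrow> x \<le> 1 \<Longrightarrow> x^2 \<le> 1"
  by (simp add: abs_le_iff abs_square_le_1)

definition ff :: "(real \<Rightarrow> real) \<Rightarrow> heis \<Rightarrow> real" where
  "ff \<alpha> u = fst u * \<alpha> (WW \<alpha> (fst u) (snd (snd u)))"

lemma aux2:
  fixes G d c D y :: real
  assumes "G = d + c*D" "c*D \<ge> c*(-2*d)" "c = (1-y)/2"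
  shows "G \<ge> y*d"
proof -
  have "c*(-2*d) = y*d - d" unfolding assms(3) by (simp add: field_simps)
  then show ?thesis using assms(1,2) by linarith
qed

lemma aux1: "(c::real)/2*(-2*d) = -(c*d)" by simp

context
  fixes \<alpha> :: "real \<Rightarrow> real"
  assumes cont: "continuous_on UNIV \<alpha>"
    and slope: "\<forall>w1 w2. w1 < w2 \<longrightarrow> (\<alpha> w2 - \<alpha> w1) / (w2 - w1) \<ge> -2"
    and surj: "range (\<lambda>w. w + \<alpha> w / 2) = UNIV"
begin

lemma g_mono_strict:
  assumes "x^2 \<le> 1" "w1 < w2"
  shows "gg \<alpha> x w2 - gg \<alpha> x w1 \<ge> x^2 * (w2 - w1)"
proof -
  have d: "(\<alpha> w2 - \<alpha> w1) / (w2 - w1) \<ge> -2" using slope assms(2) by blast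
  have p: "0 < w2 - w1" using assms(2) by simp
  have "-2 * (w2 - w1) \<le> \<alpha> w2 - \<alpha> w1" using d p by (simp add: pos_le_divide_eq)
  moreover have c: "0 \<le> (1 - x^2)/2" using assms(1) by simp
  ultimately have m: "(1 - x^2)/2 * (-2 * (w2 - w1)) \<le> (1 - x^2)/2 * (\<alpha> w2 - \<alpha> w1)"
    by (rule mult_left_mono)
  have g: "gg \<alpha> x w2 - gg \<alpha> x w1 = (w2-w1) + (1-x^2)/2*(\<alpha> w2 - \<alpha> w1)"
    unfolding gg_def by (simp add: field_simps)
  show ?thesis by (rule aux2[OF g m refl])
qed

lemma g_mono:
  assumes "x^2 \<le> 1" "w1 \<le> w2"
  shows "gg \<alpha> x w1 \<le> gg \<alpha> x w2"
proof (cases "w1 = w2")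
  case False
  then have "w1 < w2" using assms by simp
  have "0 \<le> x^2 * (w2 - w1)" using \<open>w1 < w2\<close> by simp
  with g_mono_strict[OF assms(1) \<open>w1 < w2\<close>] show ?thesis by simp
qed simp

lemma g_cont: "continuous_on S (gg \<alpha> x)"
proof -
  have "continuous_on UNIV (gg \<alpha> x)"
    unfolding gg_def by (intro continuous_intros cont)
  then show ?thesis by (rule continuous_on_subset) simp
qed

lemma g_surj:
  assumes "x^2 \<le> 1"
  shows "\<exists>w. gg \<alpha> x w = z"
proof -
  have "z \<in> range (\<lambda>w. w + \<alpha> w / 2)" using surj by simp
  then obtain a where a0: "z = a + \<alpha> a / 2" by (rule rangeE)
  then have a: "a + \<alpha> a / 2 = z" by simp
  have geq: "gg \<alpha> x w = x^2 * w + (1 - x^2) * (w + \<alpha> w / 2)" for w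
    unfolding gg_def by (simp add: field_simps)
  have eta_mono: "w1 \<le> w2 \<Longrightarrow> w1 + \<alpha> w1 / 2 \<le> w2 + \<alpha> w2 / 2" for w1 w2
  proof -
    assume "w1 \<le> w2"
    moreover have "(0::real)^2 \<le> 1" by simp
    ultimately have "gg \<alpha> 0 w1 \<le> gg \<alpha> 0 w2" using g_mono by blast
    moreover have "gg \<alpha> 0 w = w + \<alpha> w / 2" for w by (simp add: gg_def)
    ultimately show ?thesis by simp
  qed
  have nn: "0 \<le> x^2" "0 \<le> 1 - x^2" using assms by simp_all
  show ?thesis
  proof (cases "a \<le> z")
    case True
    have "gg \<alpha> x a \<le> z"
    proof -
      have "x^2 * a \<le> x^2 * z" using mult_left_mono[OF True nn(1)] .
      then show ?thesis unfolding geq a by (simp add: left_diff_distrib)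
    qed
    moreover have "z \<le> gg \<alpha> x z"
    proof -
      have "z \<le> z + \<alpha> z / 2" using eta_mono[OF True] a by simp
      then have "(1 - x^2) * z \<le> (1 - x^2) * (z + \<alpha> z / 2)" using nn(2) by (rule mult_left_mono)
      then show ?thesis unfolding geq by (simp add: left_diff_distrib)
    qed
    ultimately have "\<exists>w. a \<le> w \<and> w \<le> z \<and> gg \<alpha> x w = z"
      apply -
      apply (rule IVT')
      apply assumption+
      apply (rule True)
      apply (rule g_cont)
      done
    then show ?thesis by blast
  next
    case False
    then have F: "z \<le> a" by simp
    have "z \<le> gg \<alpha> x a"
    proof -
      have "x^2 * z \<le> x^2 * a" using mult_left_mono[OF F nn(1)] .
      then show ?thesis unfolding geq a by (simp add: left_diff_distrib)
    qed
    moreover have "gg \<alpha> x z \<le> z"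
    proof -
      have "z + \<alpha> z / 2 \<le> z" using eta_mono[OF F] a by simp
      then have "(1 - x^2) * (z + \<alpha> z / 2) \<le> (1 - x^2) * z" using nn(2) by (rule mult_left_mono)
      then show ?thesis unfolding geq by (simp add: left_diff_distrib)
    qed
    ultimately have "\<exists>w. z \<le> w \<and> w \<le> a \<and> gg \<alpha> x w = z"
      apply -
      apply (rule IVT')
      apply assumption+
      apply (rule F)
      apply (rule g_cont)
      done
    then show ?thesis by blast
  qed
qed

lemma W_eq: "x^2 \<le> 1 \<Longrightarrow> gg \<alpha> x (WW \<alpha> x z) = z"
proof -
  assume "x^2 \<le> 1"
  then obtain w where "gg \<alpha> x w = z" using g_surj by blast
  then show ?thesis unfolding WW_def by (rule someI)
qed

lemma W_unique: "x^2 \<le> 1 \<Longrightarrow> x \<noteq> 0 \<Longrightarrow> gg \<alpha> x w = z \<Longrightarrow> WW \<alpha> x z = w"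
proof -
  assume a: "x^2 \<le> 1" "x \<noteq> 0" "gg \<alpha> x w = z"
  have inj: "gg \<alpha> x w1 \<noteq> gg \<alpha> x w2" if "w1 < w2" for w1 w2
  proof -
    have "x^2 * (w2 - w1) > 0" using a that by simp
    then show ?thesis using g_mono_strict[OF a(1) that] by simp
  qed
  have "gg \<alpha> x (WW \<alpha> x z) = z" using W_eq a by simp
  show ?thesis
  proof (rule linorder_cases[of "WW \<alpha> x z" w])
    assume "WW \<alpha> x z < w"
    from inj[OF this] show ?thesis using a(3) \<open>gg \<alpha> x (WW \<alpha> x z) = z\<close> by simp
  next
    assume "w < WW \<alpha> x z"
    from inj[OF this] show ?thesis using a(3) \<open>gg \<alpha> x (WW \<alpha> x z) = z\<close> by simp
  qed
qed



lemma tend_coords: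
  "((\<lambda>u. fst u) \<longlongrightarrow> x0) (at (x0,y0,z0) within S)"
  "((\<lambda>u. snd (snd u)) \<longlongrightarrow> z0) (at (x0,y0,z0) within S)"
  using tendsto_fst[OF tendsto_ident_at[of "(x0,y0,z0)" S]]
    tendsto_snd[OF tendsto_snd[OF tendsto_ident_at[of "(x0,y0,z0)" S]]] by simp_all

lemma ev_K: "eventually (\<lambda>u. u \<in> K) (at u0 within K)"
  by (simp add: eventually_at_filter)

lemma ev_lower:
  assumes "gg \<alpha> x0 a < z0"
  shows "eventually (\<lambda>u. a < WW \<alpha> (fst u) (snd (snd u))) (at (x0,0,z0) within K)"
proof -
  have "((\<lambda>u. gg \<alpha> (fst u) a - snd (snd u)) \<longlongrightarrow> gg \<alpha> x0 a - z0) (at (x0,0,z0) within K)"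
    unfolding gg_def using tend_coords by (intro tendsto_intros) simp_all
  then have "eventually (\<lambda>u. gg \<alpha> (fst u) a - snd (snd u) < 0) (at (x0,0,z0) within K)"
    by (rule order_tendstoD(2)) (use assms in simp)
  then show ?thesis using ev_K
  proof eventually_elim
    case (elim u)
    then obtain x z where u: "u = (x,0,z)" "-1 \<le> x" "x \<le> 1" by (auto simp: K_def)
    have sq: "x^2 \<le> 1" using sq_le1 u by blast
    have e: "gg \<alpha> x (WW \<alpha> x z) = z" using W_eq sq by blast
    show ?case
    proof (rule ccontr)
      assume "\<not> a < WW \<alpha> (fst u) (snd (snd u))"
      then have "gg \<alpha> x (WW \<alpha> x z) \<le> gg \<alpha> x a" using g_mono[OF sq] u by simp
      then show False using e elim u by simp
    qed
  qed
qed

lemma ev_upper: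
  assumes "z0 < gg \<alpha> x0 b"
  shows "eventually (\<lambda>u. WW \<alpha> (fst u) (snd (snd u)) < b) (at (x0,0,z0) within K)"
proof -
  have "((\<lambda>u. gg \<alpha> (fst u) b - snd (snd u)) \<longlongrightarrow> gg \<alpha> x0 b - z0) (at (x0,0,z0) within K)"
    unfolding gg_def using tend_coords by (intro tendsto_intros) simp_all
  then have "eventually (\<lambda>u. gg \<alpha> (fst u) b - snd (snd u) > 0) (at (x0,0,z0) within K)"
    by (rule order_tendstoD(1)) (use assms in simp)
  then show ?thesis using ev_K
  proof eventually_elim
    case (elim u)
    then obtain x z where u: "u = (x,0,z)" "-1 \<le> x" "x \<le> 1" by (auto simp: K_def)
    have sq: "x^2 \<le> 1" using sq_le1 u by blast
    have e: "gg \<alpha> x (WW \<alpha> x z) = z" using W_eq sq by blast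
    show ?case
    proof (rule ccontr)
      assume "\<not> WW \<alpha> (fst u) (snd (snd u)) < b"
      then have "gg \<alpha> x b \<le> gg \<alpha> x (WW \<alpha> x z)" using g_mono[OF sq] u by simp
      then show False using e elim u by simp
    qed
  qed
qed

lemma isC: "isCont \<alpha> w"
  using cont by (simp add: continuous_on_eq_continuous_at)

lemma cont_ff: "continuous_on K (ff \<alpha>)"
  unfolding continuous_on_def
proof
  fix u0 assume "u0 \<in> K"
  then obtain x0 z0 where u0: "u0 = (x0,0,z0)" "-1 \<le> x0" "x0 \<le> 1" by (auto simp: K_def)
  have sq0: "x0^2 \<le> 1" using sq_le1 u0 by blast
  show "(ff \<alpha> \<longlongrightarrow> ff \<alpha> u0) (at u0 within K)"
  proof (cases "x0 = 0")
    case False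
    define W0 where "W0 = WW \<alpha> x0 z0"
    have e0: "gg \<alpha> x0 W0 = z0" using W_eq sq0 W0_def by blast
    have strict: "gg \<alpha> x0 a < gg \<alpha> x0 b" if "a < b" for a b
    proof -
      have "x0^2 * (b - a) > 0" using False that by simp
      then show ?thesis using g_mono_strict[OF sq0 that] by simp
    qed
    have tW: "((\<lambda>u. WW \<alpha> (fst u) (snd (snd u))) \<longlongrightarrow> W0) (at u0 within K)"
    proof (rule order_tendstoI)
      fix a assume "a < W0"
      then show "eventually (\<lambda>u. a < WW \<alpha> (fst u) (snd (snd u))) (at u0 within K)"
        using ev_lower[of x0 a z0] strict[of a W0] e0 u0 by simp
    next
      fix b assume "W0 < b"
      then show "eventually (\<lambda>u. WW \<alpha> (fst u) (snd (snd u)) < b) (at u0 within K)"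
        using ev_upper[of z0 x0 b] strict[of W0 b] e0 u0 by simp
    qed
    have "((\<lambda>u. fst u * \<alpha> (WW \<alpha> (fst u) (snd (snd u)))) \<longlongrightarrow> x0 * \<alpha> W0) (at u0 within K)"
      using tend_coords(1) isCont_tendsto_compose[OF isC tW] u0 by (intro tendsto_mult) auto
    then show ?thesis unfolding ff_def[abs_def] using u0 W0_def by simp
  next
    case True
    obtain w1 where w1: "gg \<alpha> x0 w1 = z0 - 1" using g_surj sq0 by blast
    obtain w2 where w2: "gg \<alpha> x0 w2 = z0 + 1" using g_surj sq0 by blast
    have "compact (\<alpha> ` {w1..w2})"
      by (rule compact_continuous_image) (use continuous_on_subset[OF cont] in auto)
    then obtain B where B: "\<forall>y\<in>\<alpha> ` {w1..w2}. norm y \<le> B"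
      using compact_imp_bounded[OF \<open>compact (\<alpha> ` {w1..w2})\<close>] unfolding bounded_iff by blast
    have ev: "eventually (\<lambda>u. norm (ff \<alpha> u) \<le> \<bar>fst u\<bar> * B) (at u0 within K)"
      using ev_lower[of x0 w1 z0] ev_upper[of z0 x0 w2] w1 w2 u0
    proof -
      have "eventually (\<lambda>u. w1 < WW \<alpha> (fst u) (snd (snd u))) (at u0 within K)"
        using ev_lower[of x0 w1 z0] w1 u0 by simp
      moreover have "eventually (\<lambda>u. WW \<alpha> (fst u) (snd (snd u)) < w2) (at u0 within K)"
        using ev_upper[of z0 x0 w2] w2 u0 by simp
      ultimately show ?thesis
      proof eventually_elim
        case (elim u)
        then have "\<bar>\<alpha> (WW \<alpha> (fst u) (snd (snd u)))\<bar> \<le> B" using B by auto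
        then show ?case unfolding ff_def real_norm_def abs_mult by (rule mult_left_mono) simp
      qed
    qed
    have "((\<lambda>u. \<bar>fst u\<bar> * B) \<longlongrightarrow> \<bar>x0\<bar> * B) (at u0 within K)"
      using tend_coords(1) u0 by (intro tendsto_intros) auto
    then have "((\<lambda>u. \<bar>fst u\<bar> * B) \<longlongrightarrow> 0) (at u0 within K)" using True by simp
    from Lim_null_comparison[OF ev this] show ?thesis
      using True u0 by (simp add: ff_def[abs_def])
  qed
qed

end



lemma frontier_pt:
  assumes "x = 1 \<or> x = -1"
  shows "(x, 0, z) \<in> (subtopology euclidean V0) frontier_of K"
proof -
  have KV: "K \<subseteq> V0" by (auto simp: K_def V0_def)
  have inK: "(x,0,z) \<in> K" using assms by (auto simp: K_def)
  then have c: "(x,0,z) \<in> (subtopology euclidean V0) closure_of K"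
    using closure_of_subset[of K "subtopology euclidean V0"] KV by auto
  have ni: "(x,0,z) \<notin> (subtopology euclidean V0) interior_of K"
  proof
    assume "(x,0,z) \<in> (subtopology euclidean V0) interior_of K"
    then obtain T where T: "openin (subtopology euclidean V0) T" "(x,0,z) \<in> T" "T \<subseteq> K"
      unfolding interior_of_def by auto
    then obtain U where U: "open U" "T = U \<inter> V0"
      by (auto simp: openin_subtopology)
    then have "(x,0,z) \<in> U" using T by auto
    then obtain e where e: "e > 0" "ball (x,0,z) e \<subseteq> U"
      using U(1) open_contains_ball by blast
    define p where "p = (x + x * e / 2, 0::real, z)"
    have "dist p (x,0,z) = e/2" using assms e by (auto simp: p_def dist_Pair_Pair dist_real_def)
    then have "p \<in> U" using e by (auto simp: dist_commute)
    moreover have "p \<in> V0" by (auto simp: p_def V0_def)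
    moreover have "p \<notin> K" using assms e by (auto simp: p_def K_def)
    ultimately show False using T U by auto
  qed
  show ?thesis unfolding frontier_of_def using c ni by auto
qed

lemma backward:
  fixes \<alpha> :: "real \<Rightarrow> real"
  assumes cont: "continuous_on UNIV \<alpha>"
    and slope: "\<forall>w1 w2. w1 < w2 \<longrightarrow> (\<alpha> w2 - \<alpha> w1) / (w2 - w1) \<ge> -2"
    and surj: "range (\<lambda>w. w + \<alpha> w / 2) = UNIV"
  shows "graphical_strip K (S_alpha \<alpha>)"
proof -
  let ?f = "ff \<alpha>"
  have sq: "-1 \<le> x \<Longrightarrow> x \<le> 1 \<Longrightarrow> x^2 \<le> 1" for x :: real by (rule sq_le1)
  have ffv: "?f (t, 0, gg \<alpha> t w) = t * \<alpha> w" if "-1 \<le> t" "t \<le> 1" for t w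
  proof (cases "t = 0")
    case True then show ?thesis by (simp add: ff_def)
  next
    case False
    then have "WW \<alpha> t (gg \<alpha> t w) = w"
      using W_unique[OF cont slope surj] sq that by blast
    then show ?thesis by (simp add: ff_def)
  qed
  have eqS: "S_alpha \<alpha> = intrinsic_graph K ?f"
  proof
    show "S_alpha \<alpha> \<subseteq> intrinsic_graph K ?f"
    proof
      fix P assume "P \<in> S_alpha \<alpha>"
      then obtain w t where P: "-1 \<le> t" "t \<le> 1" "P = (t, t * \<alpha> w, w + \<alpha> w / 2)"
        unfolding Salpha_mem by blast
      have "gg \<alpha> t w + t * (t * \<alpha> w) / 2 = w + \<alpha> w / 2"
        by (simp add: gg_def field_simps power2_eq_square)
      then show "P \<in> intrinsic_graph K ?f"
        unfolding graph_mem using P ffv[OF P(1,2), of w]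
        by (intro exI[of _ t] exI[of _ "gg \<alpha> t w"]) simp
    qed
  next
    show "intrinsic_graph K ?f \<subseteq> S_alpha \<alpha>"
    proof
      fix P assume "P \<in> intrinsic_graph K ?f"
      then obtain x z where P: "-1 \<le> x" "x \<le> 1" "P = (x, ?f(x,0,z), z + x * ?f(x,0,z)/2)"
        unfolding graph_mem by blast
      define w where "w = WW \<alpha> x z"
      have e: "gg \<alpha> x w = z" using W_eq[OF cont slope surj] sq P w_def by blast
      have fv: "?f (x,0,z) = x * \<alpha> w" by (simp add: ff_def w_def)
      have "z + x * (x * \<alpha> w) / 2 = w + \<alpha> w / 2"
        using e by (simp add: gg_def field_simps power2_eq_square)
      then show "P \<in> S_alpha \<alpha>"
        unfolding Salpha_mem using P fv
        by (intro exI[of _ w] exI[of _ x]) simp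
    qed
  qed
  have bd1: "(-1, - \<alpha> w, w + \<alpha> w / 2) \<in> graph_boundary K ?f" for w
  proof -
    have "gg \<alpha> (-1) w = w" by (simp add: gg_def)
    then have fv: "?f (-1, 0, w) = - \<alpha> w" using ffv[of "-1" w] by simp
    show ?thesis unfolding graph_boundary_def intrinsic_graph_def
      using frontier_pt[of "-1" w] fv
      by (intro CollectI exI[of _ "(-1,0,w)"]) (simp add: Yt_def)
  qed
  have bd2: "(1, \<alpha> w, w + \<alpha> w / 2) \<in> graph_boundary K ?f" for w
  proof -
    have "gg \<alpha> 1 w = w" by (simp add: gg_def)
    then have fv: "?f (1, 0, w) = \<alpha> w" using ffv[of 1 w] by simp
    show ?thesis unfolding graph_boundary_def intrinsic_graph_def
      using frontier_pt[of 1 w] fv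
      by (intro CollectI exI[of _ "(1,0,w)"]) (simp add: Yt_def)
  qed
  define R where "R = range (\<lambda>w. closed_segment (-1::real, - \<alpha> w, w + \<alpha> w / 2) (1, \<alpha> w, w + \<alpha> w / 2))"
  have UR: "\<Union>R = S_alpha \<alpha>" by (simp add: R_def S_alpha_def)
  have Rprop: "\<forall>\<sigma>\<in>R. (\<exists>p q. horizontal_pair p q \<and> \<sigma> = closed_segment p q \<and>
                        p \<in> graph_boundary K ?f \<and> q \<in> graph_boundary K ?f) \<and> \<sigma> \<inter> z_axis \<noteq> {}"
  proof
    fix \<sigma> assume "\<sigma> \<in> R"
    then obtain w where \<sigma>: "\<sigma> = closed_segment (-1, - \<alpha> w, w + \<alpha> w / 2) (1, \<alpha> w, w + \<alpha> w / 2)"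
      by (auto simp: R_def)
    have hp: "horizontal_pair (-1, - \<alpha> w, w + \<alpha> w / 2) (1, \<alpha> w, w + \<alpha> w / 2)"
      unfolding horizontal_pair_def
      by (intro exI[of _ 2] exI[of _ "2 * \<alpha> w"]) simp
    have "(0, 0, w + \<alpha> w / 2) \<in> \<sigma>" unfolding \<sigma> seg_mem by (intro exI[of _ 0]) simp
    moreover have "(0, 0, w + \<alpha> w / 2) \<in> z_axis" by (simp add: z_axis_def)
    ultimately have "\<sigma> \<inter> z_axis \<noteq> {}" by blast
    moreover have "\<exists>p q. horizontal_pair p q \<and> \<sigma> = closed_segment p q \<and>
                        p \<in> graph_boundary K ?f \<and> q \<in> graph_boundary K ?f"
      by (rule exI[of _ "(-1, - \<alpha> w, w + \<alpha> w / 2)"], rule exI[of _ "(1, \<alpha> w, w + \<alpha> w / 2)"])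
        (intro conjI hp \<sigma> bd1 bd2)
    ultimately show "(\<exists>p q. horizontal_pair p q \<and> \<sigma> = closed_segment p q \<and>
                        p \<in> graph_boundary K ?f \<and> q \<in> graph_boundary K ?f) \<and> \<sigma> \<inter> z_axis \<noteq> {}"
      by (rule conjI[rotated])
  qed
  have KV: "K \<subseteq> V0" by (auto simp: K_def V0_def)
  show ?thesis unfolding graphical_strip_def
    apply (rule conjI[OF KV])
    apply (rule exI[of _ ?f])
    apply (rule conjI[OF cont_ff[OF cont slope surj]])
    apply (rule conjI[OF eqS])
    apply (rule exI[of _ R])
    by (rule conjI[OF UR Rprop])
qed


theorem lemma3p1:
  fixes \<alpha> :: "real \<Rightarrow> real"
  assumes "continuous_on UNIV \<alpha>"
  defines "\<eta> \<equiv> (\<lambda>w. w + \<alpha> w / 2)"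
  shows "graphical_strip K (S_alpha \<alpha>) \<longleftrightarrow>
           ((\<forall>w1 w2. w1 < w2 \<longrightarrow> (\<alpha> w2 - \<alpha> w1) / (w2 - w1) \<ge> -2) \<and> range \<eta> = UNIV)"
proof
  assume "graphical_strip K (S_alpha \<alpha>)"
  from forward[OF this] show "(\<forall>w1 w2. w1 < w2 \<longrightarrow> (\<alpha> w2 - \<alpha> w1) / (w2 - w1) \<ge> -2) \<and> range \<eta> = UNIV"
    unfolding \<eta>_def .
next
  assume h: "(\<forall>w1 w2. w1 < w2 \<longrightarrow> (\<alpha> w2 - \<alpha> w1) / (w2 - w1) \<ge> -2) \<and> range \<eta> = UNIV"
  show "graphical_strip K (S_alpha \<alpha>)"
    apply (rule backward[OF assms(1)])
    using h unfolding \<eta>_def by (rule conjunct1, rule conjunct2)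
qed

end
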